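(* Let $\Delta$ be a simplicial complex on $[n]$ with facets $F_1,\ldots,F_t$. Then $\Delta$ is a quasi-tree if and only if the matrix $M_\Delta$ contains a $(t-1)\times t$ submatrix $M^\sharp_\Delta$ (formed by $t-1$ of its rows) with the property that, for each $1\leq j\leq t$, the $(t-1)\times(t-1)$ matrix $M^\sharp_\Delta(j)$ obtained by deleting the $j$th column of $M^\sharp_\Delta$ satisfies $\det(M^\sharp_\Delta(j))=\pm\, x_{[n]}/x_{F_j}$.
   Context: $S=K[x_1,\ldots,x_n]$, $x_F=\prod_{i\in F}x_i$. A simplicial complex on $[n]$ is a collection of subsets of $[n]$ containing all singletons and closed under taking subsets; facets are maximal faces. $M_\Delta$ is the $\binom t2\times t$ matrix over $S$ with rows indexed by pairs $(i,j)$, $1\le i<j\le t$, and columns by $k\in[t]$, whose entries are $a^{(i,j)}_i=x_{F_i\setminus F_j}$, $a^{(i,j)}_j=x_{F_j\setminus F_i}$, and $a^{(i,j)}_k=0$ for $k\notin\{i,j\}$. A facet $F$ is a leaf if either it is the only facet, or there is a facet $G\neq F$ with $H\cap F\subseteq G\cap F$ for every facet $H\neq F$. $\Delta$ is a quasi-tree if its facets can be labeled so that, in this labeling $G_1,\ldots,G_m$, each $G_i$ is a leaf of the complex generated by $G_1,\ldots,G_i$. *)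

theory Defs
  imports "HOL-Library.Poly_Mapping" "Jordan_Normal_Form.Determinant"
begin

text \<open>The polynomial ring S = K[x_1,...,x_n] is represented as the type mpoly below:
  finitely supported maps from exponent vectors to coefficients.\<close>

type_synonym 'k mpoly = "(nat \<Rightarrow>\<^sub>0 nat) \<Rightarrow>\<^sub>0 'k"

definition var :: "nat \<Rightarrow> 'k::field mpoly" where
  "var i = Poly_Mapping.single (Poly_Mapping.single i 1) 1"

definition xprod :: "nat set \<Rightarrow> 'k::field mpoly" where
  "xprod F = (\<Prod>i\<in>F. var i)"

definition simplicial_complex :: "nat \<Rightarrow> nat set set \<Rightarrow> bool" where
  "simplicial_complex n \<Delta> \<longleftrightarrow>
     \<Delta> \<subseteq> Pow {1..n} \<and> (\<forall>i\<in>{1..n}. {i} \<in> \<Delta>) \<and>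
     (\<forall>F\<in>\<Delta>. \<forall>G. G \<subseteq> F \<longrightarrow> G \<in> \<Delta>)"

definition facets :: "nat set set \<Rightarrow> nat set set" where
  "facets \<Delta> = {F \<in> \<Delta>. \<forall>G\<in>\<Delta>. F \<subseteq> G \<longrightarrow> G = F}"

definition generated :: "nat set set \<Rightarrow> nat set set" where
  "generated Gs = {A. \<exists>G\<in>Gs. A \<subseteq> G}"

definition is_leaf :: "nat set set \<Rightarrow> nat set \<Rightarrow> bool" where
  "is_leaf \<Delta> F \<longleftrightarrow> F \<in> facets \<Delta> \<and>
     (facets \<Delta> = {F} \<or>
      (\<exists>G\<in>facets \<Delta>. G \<noteq> F \<and> (\<forall>H\<in>facets \<Delta>. H \<noteq> F \<longrightarrow> H \<inter> F \<subseteq> G \<inter> F)))"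

definition quasi_tree :: "nat set set \<Rightarrow> bool" where
  "quasi_tree \<Delta> \<longleftrightarrow> (\<exists>Gs. distinct Gs \<and> set Gs = facets \<Delta> \<and>
     (\<forall>i<length Gs. is_leaf (generated (set (take (Suc i) Gs))) (Gs ! i)))"

text \<open>Entry of M_\<Delta> in row (i,j) (with i<j) and column k; facets are indexed 0..t-1
  by the list Fs.\<close>
definition M_entry :: "nat set list \<Rightarrow> nat \<times> nat \<Rightarrow> nat \<Rightarrow> 'k::field mpoly" where
  "M_entry Fs p k = (let (i, j) = p in
     if k = i then xprod (Fs ! i - Fs ! j)
     else if k = j then xprod (Fs ! j - Fs ! i) else 0)"

definition M_sub :: "nat set list \<Rightarrow> (nat \<times> nat) list \<Rightarrow> 'k::field mpoly mat" where
  "M_sub Fs rs = mat (length rs) (length Fs) (\<lambda>(r, k). M_entry Fs (rs ! r) k)"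

definition del_col :: "'a mat \<Rightarrow> nat \<Rightarrow> 'a mat" where
  "del_col A j = mat (dim_row A) (dim_col A - 1)
     (\<lambda>(r, c). A $$ (r, if c < j then c else Suc c))"

end

theory Submission
  imports Defs
begin

definition ends :: "nat \<times> nat \<Rightarrow> nat set" where "ends e = {fst e, snd e}"
definition oth :: "nat \<times> nat \<Rightarrow> nat \<Rightarrow> nat" where
  "oth e v = (if v = fst e then snd e else fst e)"
definition valid :: "nat set \<Rightarrow> (nat \<times> nat) set \<Rightarrow> nat \<Rightarrow> (nat \<times> nat \<Rightarrow> nat) \<Rightarrow> bool" where
  "valid V E j s \<longleftrightarrow> (\<forall>e\<in>E. s e \<in> ends e) \<and> bij_betw s E (V - {j})"
definition Dset :: "(nat \<Rightarrow> nat set) \<Rightarrow> (nat \<times> nat \<Rightarrow> nat) \<Rightarrow> nat \<times> nat \<Rightarrow> nat set" where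
  "Dset F s e = F (s e) - F (oth e (s e))"
definition good :: "(nat \<Rightarrow> nat set) \<Rightarrow> nat set \<Rightarrow> (nat \<times> nat) set \<Rightarrow> nat \<Rightarrow> (nat \<times> nat \<Rightarrow> nat) \<Rightarrow> bool" where
  "good F V E j s \<longleftrightarrow> valid V E j s \<and>
     (\<forall>e\<in>E. \<forall>e'\<in>E. e \<noteq> e' \<longrightarrow> Dset F s e \<inter> Dset F s e' = {}) \<and>
     (\<Union>e\<in>E. Dset F s e) = (\<Union>v\<in>V. F v) - F j"
definition wfE :: "nat set \<Rightarrow> (nat \<times> nat) set \<Rightarrow> bool" where
  "wfE V E \<longleftrightarrow> (\<forall>e\<in>E. fst e < snd e \<and> fst e \<in> V \<and> snd e \<in> V)"

inductive built :: "(nat \<Rightarrow> nat set) \<Rightarrow> nat list \<Rightarrow> (nat \<times> nat) set \<Rightarrow> bool" for F where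
  bnil: "built F [] {}"
| bone: "built F [c] {}"
| bsnoc: "built F L E \<Longrightarrow> L \<noteq> [] \<Longrightarrow> c \<notin> set L \<Longrightarrow> p \<in> set L \<Longrightarrow>
     (\<forall>h\<in>set L. F h \<inter> F c \<subseteq> F p) \<Longrightarrow> built F (L @ [c]) (insert (min c p, max c p) E)"

lemma bij_betw_remove:
  assumes "bij_betw f (insert a A) B" "a \<notin> A"
  shows "bij_betw f A (B - {f a})"
  using assms unfolding bij_betw_def by (auto simp: inj_on_insert) (metis image_eqI)

lemma bij_betw_add:
  assumes "bij_betw f A B" "a \<notin> A" "b \<notin> B"
  shows "bij_betw (f(a := b)) (insert a A) (insert b B)"
proof -
  have "bij_betw (f(a := b)) A B" using assms(1,2) by (metis bij_betw_cong fun_upd_other)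
  then show ?thesis using assms(2,3) unfolding bij_betw_def by (auto simp: inj_on_insert)
qed

lemma built_props:
  assumes "built F L E"
  shows "distinct L \<and> wfE (set L) E \<and> finite E \<and> (L \<noteq> [] \<longrightarrow> card E + 1 = length L) \<and> (L = [] \<longrightarrow> E = {})"
  using assms
proof (induction rule: built.induct)
  case bnil then show ?case by (simp add: wfE_def)
next
  case (bone c) then show ?case by (simp add: wfE_def)
next
  case (bsnoc L E c p)
  have cp: "c \<noteq> p" using bsnoc by auto
  have "(min c p, max c p) \<notin> E" using bsnoc cp unfolding wfE_def
    by (metis fst_conv max_def min_def snd_conv)
  then show ?case using bsnoc cp unfolding wfE_def by (auto simp: min_def max_def)
qed

lemma built_leaf:
  assumes "built F L E"
  shows "\<forall>i<length L. 0 < i \<longrightarrow> (\<exists>k<i. \<forall>h<i. F (L!h) \<inter> F (L!i) \<subseteq> F (L!k))"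
  using assms
proof (induction rule: built.induct)
  case (bsnoc L E c p)
  show ?case
  proof (intro allI impI)
    fix i assume i: "i < length (L @ [c])" "0 < i"
    show "\<exists>k<i. \<forall>h<i. F ((L @ [c]) ! h) \<inter> F ((L @ [c]) ! i) \<subseteq> F ((L @ [c]) ! k)"
    proof (cases "i < length L")
      case True
      then obtain k where "k < i" "\<forall>h<i. F (L!h) \<inter> F (L!i) \<subseteq> F (L!k)" using bsnoc.IH i by auto
      then show ?thesis using True by (intro exI[of _ k]) (auto simp: nth_append)
    next
      case False
      then have ii: "i = length L" using i by auto
      obtain k where k: "k < length L" "L ! k = p" using bsnoc.hyps(4) by (metis in_set_conv_nth)
      show ?thesis
      proof (intro exI[of _ k] conjI allI impI)
        show "k < i" using k ii by simp
        fix h assume "h < i"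
        then have "L ! h \<in> set L" using ii by simp
        then show "F ((L @ [c]) ! h) \<inter> F ((L @ [c]) ! i) \<subseteq> F ((L @ [c]) ! k)"
          using bsnoc.hyps(5) k ii \<open>h < i\<close> by (auto simp: nth_append)
      qed
    qed
  qed
qed auto

lemma leaf_built:
  "distinct L \<Longrightarrow> (\<forall>i<length L. 0 < i \<longrightarrow> (\<exists>k<i. \<forall>h<i. F (L!h) \<inter> F (L!i) \<subseteq> F (L!k)))
   \<Longrightarrow> \<exists>E. built F L E"
proof (induction L rule: rev_induct)
  case Nil then show ?case using bnil by blast
next
  case (snoc c L)
  have "\<forall>i<length L. 0 < i \<longrightarrow> (\<exists>k<i. \<forall>h<i. F (L!h) \<inter> F (L!i) \<subseteq> F (L!k))"
  proof (intro allI impI)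
    fix i assume i: "i < length L" "0 < i"
    have "i < length (L@[c])" using i by simp
    then obtain k where "k < i" "\<forall>h<i. F ((L@[c])!h) \<inter> F ((L@[c])!i) \<subseteq> F ((L@[c])!k)"
      using snoc.prems(2)[rule_format, OF _ i(2)] by blast
    then show "\<exists>k<i. \<forall>h<i. F (L!h) \<inter> F (L!i) \<subseteq> F (L!k)" using i
      by (intro exI[of _ k]) (auto simp: nth_append)
  qed
  then obtain E where E: "built F L E" using snoc by auto
  show ?case
  proof (cases "L = []")
    case True then show ?thesis using bone by auto
  next
    case False
    then obtain k where k: "k < length L" "\<forall>h<length L. F ((L@[c])!h) \<inter> F ((L@[c])!length L) \<subseteq> F ((L@[c])!k)"
      using snoc.prems(2)[rule_format, of "length L"] by auto
    have "\<forall>h\<in>set L. F h \<inter> F c \<subseteq> F (L!k)"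
    proof
      fix h assume "h \<in> set L"
      then obtain h' where "h' < length L" "L ! h' = h" by (metis in_set_conv_nth)
      then show "F h \<inter> F c \<subseteq> F (L!k)" using k by (auto simp: nth_append)
    qed
    then show ?thesis using bsnoc[OF E False, of c "L!k"] snoc.prems(1) k(1) by auto
  qed
qed

lemma built_good:
  assumes "built F L E"
  shows "\<forall>j\<in>set L. (\<exists>s. good F (set L) E j s) \<and>
     (\<forall>s s'. valid (set L) E j s \<longrightarrow> valid (set L) E j s' \<longrightarrow> (\<forall>e\<in>E. s e = s' e))"
  using assms
proof (induction rule: built.induct)
  case bnil then show ?case by simp
next
  case (bone c)
  have "good F {c} {} c s" for s
    unfolding good_def valid_def by (auto simp: bij_betw_def)
  then show ?case by auto
next
  case (bsnoc L E c p)
  define e0 where "e0 = (min c p, max c p)"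
  have cp: "c \<noteq> p" using bsnoc by auto
  have ends0: "ends e0 = {c, p}" unfolding e0_def ends_def by (auto simp: min_def max_def)
  have oc: "oth e0 c = p" and op: "oth e0 p = c" using cp unfolding oth_def e0_def by (auto simp: min_def max_def)
  have props: "distinct L \<and> wfE (set L) E \<and> finite E" using built_props[OF bsnoc.hyps(1)] by auto
  have cE: "\<forall>e\<in>E. c \<notin> ends e" using props bsnoc.hyps(3) unfolding wfE_def ends_def by auto
  have e0E: "e0 \<notin> E" using cE ends0 by auto
  have endsE: "\<forall>e\<in>E. ends e \<subseteq> set L" using props unfolding wfE_def ends_def by auto
  have leaf: "\<And>h x. h \<in> set L \<Longrightarrow> x \<in> F h \<Longrightarrow> x \<in> F c \<Longrightarrow> x \<in> F p" using bsnoc.hyps(5) by blast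
  let ?U = "\<Union>v\<in>set L. F v"
  have setLc: "set (L @ [c]) = insert c (set L)" by simp
  show ?case unfolding setLc e0_def[symmetric]
  proof
    fix j assume j: "j \<in> insert c (set L)"
    show "(\<exists>s. good F (insert c (set L)) (insert e0 E) j s) \<and>
      (\<forall>s s'. valid (insert c (set L)) (insert e0 E) j s \<longrightarrow>
        valid (insert c (set L)) (insert e0 E) j s' \<longrightarrow> (\<forall>e\<in>insert e0 E. s e = s' e))"
    proof (cases "j = c")
      case False
      then have jL: "j \<in> set L" using j by auto
      obtain s' where s': "good F (set L) E j s'" using bsnoc.IH jL by auto
      define s where "s = s'(e0 := c)"
      have sE: "\<forall>e\<in>E. s e = s' e" unfolding s_def using e0E by auto
      have DE: "\<forall>e\<in>E. Dset F s e = Dset F s' e" using sE unfolding Dset_def by auto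
      have D0: "Dset F s e0 = F c - F p" unfolding Dset_def s_def using oc by simp
      have val: "valid (insert c (set L)) (insert e0 E) j s"
      proof -
        have b: "bij_betw s' E (set L - {j})" using s' unfolding good_def valid_def by auto
        have "bij_betw s (insert e0 E) (insert c (set L - {j}))"
          unfolding s_def by (rule bij_betw_add[OF b e0E]) (use bsnoc.hyps(3) in auto)
        moreover have "insert c (set L - {j}) = insert c (set L) - {j}" using False by auto
        ultimately show ?thesis using s' sE ends0 unfolding valid_def good_def s_def by auto
      qed
      have Dsub: "\<forall>e\<in>E. Dset F s' e \<subseteq> ?U - F j" using s' unfolding good_def by blast
      have good: "good F (insert c (set L)) (insert e0 E) j s"
        unfolding good_def
      proof (intro conjI val)
        show "\<forall>e\<in>insert e0 E. \<forall>e'\<in>insert e0 E. e \<noteq> e' \<longrightarrow> Dset F s e \<inter> Dset F s e' = {}"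
          using s' DE D0 Dsub leaf unfolding good_def by blast
        have "(\<Union>e\<in>insert e0 E. Dset F s e) = (F c - F p) \<union> (?U - F j)"
          using s' DE D0 unfolding good_def by auto
        also have "\<dots> = (\<Union>v\<in>insert c (set L). F v) - F j"
          using leaf jL bsnoc.hyps(4) by blast
        finally show "(\<Union>e\<in>insert e0 E. Dset F s e) = (\<Union>v\<in>insert c (set L). F v) - F j" .
      qed
      have uniq: "\<forall>e\<in>insert e0 E. s1 e = s2 e"
        if v1: "valid (insert c (set L)) (insert e0 E) j s1" and v2: "valid (insert c (set L)) (insert e0 E) j s2" for s1 s2
      proof -
        have at0: "s e0 = c" if vs: "valid (insert c (set L)) (insert e0 E) j s" for s
        proof -
          have "c \<in> s ` insert e0 E" using vs False unfolding valid_def bij_betw_def by auto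
          then obtain e where e: "e \<in> insert e0 E" "s e = c" by (metis imageE)
          then have "c \<in> ends e" using vs unfolding valid_def by auto
          then have "e = e0" using e cE by auto
          then show ?thesis using e by simp
        qed
        have res: "valid (set L) E j s" if vs: "valid (insert c (set L)) (insert e0 E) j s" for s
        proof -
          have "bij_betw s E ((insert c (set L) - {j}) - {s e0})"
            using bij_betw_remove[OF _ e0E] vs unfolding valid_def by blast
          moreover have "(insert c (set L) - {j}) - {s e0} = set L - {j}" using at0[OF vs] bsnoc.hyps(3) by auto
          ultimately show ?thesis using vs unfolding valid_def by auto
        qed
        show ?thesis using bsnoc.IH jL res[OF v1] res[OF v2] at0[OF v1] at0[OF v2] by auto
      qed
      show ?thesis using good uniq by blast
    next
      case True
      have pL: "p \<in> set L" by (rule bsnoc.hyps(4))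
      obtain s' where s': "good F (set L) E p s'" using bsnoc.IH pL by auto
      define s where "s = s'(e0 := p)"
      have sE: "\<forall>e\<in>E. s e = s' e" unfolding s_def using e0E by auto
      have DE: "\<forall>e\<in>E. Dset F s e = Dset F s' e" using sE unfolding Dset_def by auto
      have D0: "Dset F s e0 = F p - F c" unfolding Dset_def s_def using op by simp
      have val: "valid (insert c (set L)) (insert e0 E) j s"
      proof -
        have b: "bij_betw s' E (set L - {p})" using s' unfolding good_def valid_def by auto
        have "bij_betw s (insert e0 E) (insert p (set L - {p}))"
          unfolding s_def by (rule bij_betw_add[OF b e0E]) auto
        moreover have "insert p (set L - {p}) = insert c (set L) - {j}" using True pL bsnoc.hyps(3) by auto
        ultimately show ?thesis using s' sE ends0 unfolding valid_def good_def s_def by auto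
      qed
      have Dsub: "\<forall>e\<in>E. Dset F s' e \<subseteq> ?U - F p" using s' unfolding good_def by blast
      have good: "good F (insert c (set L)) (insert e0 E) j s"
        unfolding good_def
      proof (intro conjI val)
        show "\<forall>e\<in>insert e0 E. \<forall>e'\<in>insert e0 E. e \<noteq> e' \<longrightarrow> Dset F s e \<inter> Dset F s e' = {}"
          using s' DE D0 Dsub unfolding good_def by blast
        have "(\<Union>e\<in>insert e0 E. Dset F s e) = (F p - F c) \<union> (?U - F p)"
          using s' DE D0 unfolding good_def by auto
        also have "\<dots> = (\<Union>v\<in>insert c (set L). F v) - F j"
          using leaf True pL by blast
        finally show "(\<Union>e\<in>insert e0 E. Dset F s e) = (\<Union>v\<in>insert c (set L). F v) - F j" .
      qed
      have uniq: "\<forall>e\<in>insert e0 E. s1 e = s2 e"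
        if v1: "valid (insert c (set L)) (insert e0 E) j s1" and v2: "valid (insert c (set L)) (insert e0 E) j s2" for s1 s2
      proof -
        have at0: "s e0 = p" if vs: "valid (insert c (set L)) (insert e0 E) j s" for s
        proof -
          have "s e0 \<in> {c, p}" using vs ends0 unfolding valid_def by auto
          moreover have "s e0 \<in> insert c (set L) - {j}" using vs unfolding valid_def bij_betw_def by auto
          ultimately show ?thesis using True by auto
        qed
        have res: "valid (set L) E p s" if vs: "valid (insert c (set L)) (insert e0 E) j s" for s
        proof -
          have "bij_betw s E ((insert c (set L) - {j}) - {s e0})"
            using bij_betw_remove[OF _ e0E] vs unfolding valid_def by blast
          moreover have "(insert c (set L) - {j}) - {s e0} = set L - {p}" using at0[OF vs] True bsnoc.hyps(3) by auto
          ultimately show ?thesis using vs unfolding valid_def by auto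
        qed
        show ?thesis using bsnoc.IH pL res[OF v1] res[OF v2] at0[OF v1] at0[OF v2] by auto
      qed
      show ?thesis using good uniq by blast
    qed
  qed
qed

lemma degree_sum:
  assumes "finite V" "finite E" "wfE V E"
  shows "(\<Sum>v\<in>V. card {e\<in>E. v \<in> ends e}) = 2 * card E"
proof -
  have "(\<Sum>v\<in>V. card {e\<in>E. v \<in> ends e}) = (\<Sum>v\<in>V. \<Sum>e\<in>E. if v \<in> ends e then 1 else 0)"
  proof (rule sum.cong[OF refl])
    fix v
    have "{e\<in>E. v \<in> ends e} = E \<inter> {e. v \<in> ends e}" by auto
    then show "card {e\<in>E. v \<in> ends e} = (\<Sum>e\<in>E. if v \<in> ends e then 1 else 0)"
      using assms by (simp add: sum.If_cases)
  qed
  also have "\<dots> = (\<Sum>e\<in>E. \<Sum>v\<in>V. if v \<in> ends e then 1 else 0)" by (rule sum.swap)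
  also have "\<dots> = (\<Sum>e\<in>E. 2)"
  proof (rule sum.cong[OF refl])
    fix e assume "e \<in> E"
    then have "V \<inter> {v. v \<in> ends e} = {fst e, snd e}" "fst e \<noteq> snd e"
      using assms(3) unfolding wfE_def ends_def by auto
    then show "(\<Sum>v\<in>V. if v \<in> ends e then 1 else 0) = (2::nat)"
      using assms(1) by (simp add: sum.If_cases)
  qed
  finally show ?thesis by simp
qed

lemma good_built:
  assumes "finite V" "wfE V E" "card E = card V - 1" "\<forall>j\<in>V. \<exists>s. good F V E j s"
  shows "\<exists>L. built F L E \<and> set L = V"
  using assms
proof (induction "card V" arbitrary: V E)
  case 0
  then have "V = {}" by simp
  then have "E = {}" using 0 unfolding wfE_def by auto
  then show ?case using bnil \<open>V = {}\<close> by auto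
next
  case (Suc m)
  have finE: "finite E"
  proof (rule finite_subset)
    show "E \<subseteq> V \<times> V" using Suc.prems(2) unfolding wfE_def by (auto simp: mem_Times_iff)
  qed (use Suc.prems(1) in auto)
  show ?case
  proof (cases m)
    case 0
    then obtain v where V: "V = {v}" using Suc.hyps(2) by (metis One_nat_def card_1_singletonE)
    then have "E = {}" using finE Suc.prems(3) by simp
    then show ?thesis using bone[of F v] V by (intro exI[of _ "[v]"]) auto
  next
    case (Suc m')
    have cardV: "card V \<ge> 2" using Suc Suc.hyps(2) by simp
    let ?deg = "\<lambda>v. card {e\<in>E. v \<in> ends e}"
    obtain c where cV: "c \<in> V" and dc: "?deg c < 2"
    proof (rule ccontr)
      assume "\<not> thesis"
      then have "\<forall>v\<in>V. 2 \<le> ?deg v" using that by (meson not_le)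
      then have "(\<Sum>v\<in>V. 2) \<le> (\<Sum>v\<in>V. ?deg v)" by (intro sum_mono) blast
      then show False using degree_sum[OF Suc.prems(1) finE Suc.prems(2)] Suc.prems(3) cardV by simp
    qed
    have "V \<noteq> {c}" using cardV by auto
    then obtain j0 where j0: "j0 \<in> V" "j0 \<noteq> c" using cV by blast
    have hit: "\<exists>e\<in>E. s e = c \<and> c \<in> ends e" if "j \<in> V" "j \<noteq> c" "good F V E j s" for j s
    proof -
      have "c \<in> s ` E" using that cV unfolding good_def valid_def bij_betw_def by auto
      then obtain e where "e \<in> E" "s e = c" by (metis imageE)
      then show ?thesis using that unfolding good_def valid_def by metis
    qed
    obtain e0 where e0: "e0 \<in> E" "c \<in> ends e0"
      using hit j0 Suc.prems(4) by blast
    have uniq: "\<And>e. e \<in> E \<Longrightarrow> c \<in> ends e \<Longrightarrow> e = e0"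
    proof (rule ccontr)
      fix e assume "e \<in> E" "c \<in> ends e" "e \<noteq> e0"
      then have "{e, e0} \<subseteq> {e\<in>E. c \<in> ends e}" using e0 by auto
      then have "card {e, e0} \<le> ?deg c" using finE by (intro card_mono) auto
      then show False using dc \<open>e \<noteq> e0\<close> by simp
    qed
    define p where "p = oth e0 c"
    have e0wf: "fst e0 < snd e0" "fst e0 \<in> V" "snd e0 \<in> V" using e0 Suc.prems(2) unfolding wfE_def by auto
    have pV: "p \<in> V" and pc: "p \<noteq> c" and ends0: "ends e0 = {c, p}"
      using e0 e0wf unfolding p_def oth_def ends_def by auto
    have e0eq: "e0 = (min c p, max c p)"
      using e0 e0wf unfolding p_def oth_def ends_def by (cases e0) (auto simp: min_def max_def)
    have sc: "s e0 = c" if "j \<in> V" "j \<noteq> c" "good F V E j s" for j s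
      using hit[OF that] uniq by blast
    have leaf: "x \<in> F p" if hyp: "h \<in> V" "h \<noteq> c" "x \<in> F h" "x \<in> F c" for h x
    proof (rule ccontr)
      assume "x \<notin> F p"
      obtain s where s: "good F V E h s" using Suc.prems(4) hyp(1) by auto
      have "x \<in> Dset F s e0" using sc[OF hyp(1,2) s] \<open>x \<notin> F p\<close> hyp(4) unfolding Dset_def p_def by simp
      then have "x \<in> (\<Union>v\<in>V. F v) - F h" using s e0(1) unfolding good_def by blast
      then show False using hyp(3) by simp
    qed
    define V' where "V' = V - {c}"
    define E' where "E' = E - {e0}"
    have EE': "E = insert e0 E'" unfolding E'_def using e0 by auto
    have e0E': "e0 \<notin> E'" unfolding E'_def by simp
    have wf': "wfE V' E'"
    proof -
      have "\<forall>e\<in>E'. c \<notin> ends e" using uniq unfolding E'_def by auto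
      then show ?thesis using Suc.prems(2) unfolding wfE_def V'_def E'_def ends_def by auto
    qed
    have card': "card E' = card V' - 1"
      unfolding E'_def V'_def using Suc.prems(3) e0 cV finE by (simp add: card_Diff_singleton)
    have good': "\<forall>j\<in>V'. \<exists>s. good F V' E' j s"
    proof
      fix j assume jV': "j \<in> V'"
      then have jV: "j \<in> V" and jc: "j \<noteq> c" unfolding V'_def by auto
      obtain s where s: "good F V E j s" using Suc.prems(4) jV by auto
      have s0: "s e0 = c" using sc[OF jV jc s] .
      have val: "valid V' E' j s"
      proof -
        have "bij_betw s E' ((V - {j}) - {s e0})"
          using bij_betw_remove[OF _ e0E'] s EE' unfolding good_def valid_def by metis
        moreover have "(V - {j}) - {s e0} = V' - {j}" using s0 unfolding V'_def by auto
        ultimately show ?thesis using s EE' unfolding good_def valid_def by auto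
      qed
      have disj: "\<forall>e\<in>E'. \<forall>e'\<in>E'. e \<noteq> e' \<longrightarrow> Dset F s e \<inter> Dset F s e' = {}"
        using s EE' unfolding good_def by blast
      have D0: "Dset F s e0 = F c - F p" unfolding Dset_def p_def s0 ..
      have dis0: "Dset F s e \<inter> Dset F s e0 = {}" if "e \<in> E'" for e
        using s EE' e0E' that unfolding good_def by (metis insertCI)
      have UE: "(\<Union>e\<in>E. Dset F s e) = Dset F s e0 \<union> (\<Union>e\<in>E'. Dset F s e)" by (simp add: EE')
      have "(\<Union>e\<in>E'. Dset F s e) = (\<Union>e\<in>E. Dset F s e) - Dset F s e0"
        unfolding UE using dis0 by blast
      also have "\<dots> = ((\<Union>v\<in>V. F v) - F j) - (F c - F p)"
      proof -
        have U: "(\<Union>e\<in>E. Dset F s e) = (\<Union>v\<in>V. F v) - F j" using s unfolding good_def by blast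
        show ?thesis unfolding U D0 ..
      qed
      also have "\<dots> = (\<Union>v\<in>V'. F v) - F j"
      proof -
        have key: "\<And>x. x \<in> F c \<Longrightarrow> x \<in> (\<Union>v\<in>V'. F v) \<Longrightarrow> x \<in> F p"
          using leaf unfolding V'_def by blast
        have pV': "p \<in> V'" using pV pc unfolding V'_def by auto
        have UV: "(\<Union>v\<in>V. F v) = F c \<union> (\<Union>v\<in>V'. F v)" using cV unfolding V'_def by blast
        show ?thesis unfolding UV using key pV' by blast
      qed
      finally show "\<exists>s. good F V' E' j s" using val disj unfolding good_def by blast
    qed
    have "card V' = m" unfolding V'_def using Suc.hyps(2) cV by simp
    then obtain L' where L': "built F L' E'" "set L' = V'"
      using Suc.hyps(1)[of V' E'] Suc.prems(1) wf' card' good' unfolding V'_def by auto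
    have L'ne: "L' \<noteq> []" using L'(2) \<open>card V' = m\<close> Suc by auto
    have "built F (L' @ [c]) (insert (min c p, max c p) E')"
    proof (rule bsnoc[OF L'(1) L'ne])
      show "c \<notin> set L'" using L'(2) unfolding V'_def by auto
      show "p \<in> set L'" using L'(2) pV pc unfolding V'_def by auto
      show "\<forall>h\<in>set L'. F h \<inter> F c \<subseteq> F p" using L'(2) leaf unfolding V'_def by blast
    qed
    moreover have "set (L' @ [c]) = V" using L'(2) cV unfolding V'_def by auto
    ultimately show ?thesis using EE' e0eq by metis
  qed
qed


definition expo :: "nat set \<Rightarrow> (nat \<Rightarrow>\<^sub>0 nat)" where
  "expo S = (\<Sum>i\<in>S. Poly_Mapping.single i 1)"

lemma xprod_single:
  assumes "finite S"
  shows "(xprod S :: 'k::field mpoly) = Poly_Mapping.single (expo S) 1"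
  using assms
proof (induction S rule: finite_induct)
  case empty then show ?case by (simp add: xprod_def expo_def)
next
  case (insert x S)
  then show ?case by (simp add: xprod_def expo_def var_def mult_single)
qed

lemma lookup_expo:
  assumes "finite S"
  shows "Poly_Mapping.lookup (expo S) x = (if x \<in> S then 1 else 0)"
  using assms by (induction S rule: finite_induct) (auto simp: expo_def Poly_Mapping.lookup_add lookup_single when_def)

lemma prod_single:
  assumes "finite E"
  shows "(\<Prod>e\<in>E. Poly_Mapping.single (f e) (1::'k::field)) = Poly_Mapping.single (\<Sum>e\<in>E. f e) 1"
  using assms
proof (induction E rule: finite_induct)
  case empty then show ?case by simp
next
  case (insert x E) then show ?case by (simp add: mult_single)
qed

lemma xprod_nonzero:
  assumes "finite S"
  shows "(xprod S :: 'k::field mpoly) \<noteq> 0"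
  using xprod_single[OF assms] by (metis lookup_single_eq one_neq_zero lookup_zero)

lemma xprod_UN:
  assumes "finite E" "\<forall>e\<in>E. finite (D e)" "\<forall>e\<in>E. \<forall>e'\<in>E. e \<noteq> e' \<longrightarrow> D e \<inter> D e' = {}"
  shows "(xprod (\<Union>e\<in>E. D e) :: 'k::field mpoly) = (\<Prod>e\<in>E. xprod (D e))"
  unfolding xprod_def using prod.UNION_disjoint[OF assms] .

lemma facet_antichain: "F \<in> facets \<Delta> \<Longrightarrow> G \<in> facets \<Delta> \<Longrightarrow> F \<subseteq> G \<Longrightarrow> F = G"
  unfolding facets_def by auto

lemma facets_generated:
  assumes "S \<subseteq> facets \<Delta>"
  shows "facets (generated S) = S"
proof
  show "facets (generated S) \<subseteq> S"
  proof
    fix A assume A: "A \<in> facets (generated S)"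
    then obtain G where G: "G \<in> S" "A \<subseteq> G" unfolding facets_def generated_def by auto
    then have "G \<in> generated S" unfolding generated_def by auto
    then have "G = A" using A G unfolding facets_def by auto
    then show "A \<in> S" using G by simp
  qed
  show "S \<subseteq> facets (generated S)"
  proof
    fix G assume G: "G \<in> S"
    have "B = G" if hyp: "B \<in> generated S" "G \<subseteq> B" for B
    proof -
      obtain G' where "G' \<in> S" "B \<subseteq> G'" using hyp unfolding generated_def by auto
      then have "G = G'" using facet_antichain[of G \<Delta> G'] G assms hyp by auto
      then show ?thesis using hyp \<open>B \<subseteq> G'\<close> by auto
    qed
    moreover have "G \<in> generated S" using G unfolding generated_def by auto
    ultimately show "G \<in> facets (generated S)" unfolding facets_def by auto
  qed
qed

lemma set_take_nth:
  assumes "i < length xs"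
  shows "set (take (Suc i) xs) = (!) xs ` {0..<Suc i}"
proof -
  have "take (Suc i) xs = map ((!) xs) [0..<Suc i]"
    using assms by (intro nth_equalityI) (auto simp del: upt_Suc)
  then show ?thesis by (metis set_map set_upt)
qed

lemma QT:
  assumes dFs: "distinct Fs" and sFs: "set Fs = facets \<Delta>"
  shows "quasi_tree \<Delta> \<longleftrightarrow> (\<exists>L. distinct L \<and> set L = {0..<length Fs} \<and>
     (\<forall>i<length L. 0 < i \<longrightarrow> (\<exists>k<i. \<forall>h<i. Fs!(L!h) \<inter> Fs!(L!i) \<subseteq> Fs!(L!k))))"
proof
  assume "quasi_tree \<Delta>"
  then obtain Gs where Gs: "distinct Gs" "set Gs = facets \<Delta>"
    "\<forall>i<length Gs. is_leaf (generated (set (take (Suc i) Gs))) (Gs ! i)"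
    unfolding quasi_tree_def by auto
  define L where "L = map (\<lambda>G. SOME i. i < length Fs \<and> Fs ! i = G) Gs"
  have ex: "\<exists>i. i < length Fs \<and> Fs ! i = G" if "G \<in> set Gs" for G
    using that Gs(2) sFs by (metis in_set_conv_nth)
  have someG: "Fs ! (SOME i. i < length Fs \<and> Fs ! i = G) = G" if "G \<in> set Gs" for G
    using someI_ex[OF ex[OF that]] by blast
  have mL: "map ((!) Fs) L = Gs"
  proof (rule nth_equalityI)
    show "length (map ((!) Fs) L) = length Gs" unfolding L_def by simp
    fix i assume "i < length (map ((!) Fs) L)"
    then have i: "i < length Gs" unfolding L_def by simp
    show "map ((!) Fs) L ! i = Gs ! i" unfolding L_def using i someG[OF nth_mem[OF i]] by simp
  qed
  have Lt: "set L \<subseteq> {0..<length Fs}"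
    unfolding L_def by (auto intro: someI2_ex[OF ex])
  have dL: "distinct L" using Gs(1) mL by (metis distinct_map)
  have "card (set L) = length Fs"
    using dL Gs(1,2) dFs sFs mL by (metis distinct_card length_map)
  then have sL: "set L = {0..<length Fs}" using Lt by (simp add: card_subset_eq)
  have GL: "Gs ! i = Fs ! (L ! i)" if "i < length L" for i using mL that by (metis nth_map)
  have lenL: "length L = length Gs" using mL by auto
  have "\<forall>i<length L. 0 < i \<longrightarrow> (\<exists>k<i. \<forall>h<i. Fs!(L!h) \<inter> Fs!(L!i) \<subseteq> Fs!(L!k))"
  proof (intro allI impI)
    fix i assume i: "i < length L" "0 < i"
    let ?S = "set (take (Suc i) Gs)"
    have S: "?S = (!) Gs ` {0..<Suc i}" using set_take_nth i lenL by auto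
    have Ssub: "?S \<subseteq> facets \<Delta>" using set_take_subset[of "Suc i" Gs] Gs(2) by blast
    have leaf: "is_leaf (generated ?S) (Gs ! i)" using Gs(3) i lenL by auto
    have ne: "?S \<noteq> {Gs ! i}"
    proof
      assume "?S = {Gs ! i}"
      moreover have "Gs ! 0 \<in> ?S" using S by auto
      ultimately have "Gs ! 0 = Gs ! i" by auto
      moreover have "0 < length Gs" "i < length Gs" using i lenL by auto
      ultimately show False using Gs(1) i(2) nth_eq_iff_index_eq[of Gs 0 i] by simp
    qed
    then obtain G where G: "G \<in> ?S" "G \<noteq> Gs ! i" "\<forall>H\<in>?S. H \<noteq> Gs ! i \<longrightarrow> H \<inter> Gs ! i \<subseteq> G \<inter> Gs ! i"
      using leaf unfolding is_leaf_def facets_generated[OF Ssub] by auto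
    obtain k where k: "k < Suc i" "G = Gs ! k" using G(1) S by auto
    have ki: "k < i" using k G(2) by (cases "k = i") auto
    show "\<exists>k<i. \<forall>h<i. Fs!(L!h) \<inter> Fs!(L!i) \<subseteq> Fs!(L!k)"
    proof (intro exI[of _ k] conjI allI impI ki)
      fix h assume h: "h < i"
      have "Gs ! h \<in> ?S" using S h by auto
      moreover have "Gs ! h \<noteq> Gs ! i" using Gs(1) h i lenL by (simp add: nth_eq_iff_index_eq)
      ultimately have "Gs ! h \<inter> Gs ! i \<subseteq> Gs ! k" using G(3) k by auto
      then show "Fs!(L!h) \<inter> Fs!(L!i) \<subseteq> Fs!(L!k)" using GL h i ki by auto
    qed
  qed
  then show "\<exists>L. distinct L \<and> set L = {0..<length Fs} \<and>
     (\<forall>i<length L. 0 < i \<longrightarrow> (\<exists>k<i. \<forall>h<i. Fs!(L!h) \<inter> Fs!(L!i) \<subseteq> Fs!(L!k)))"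
    using dL sL by blast
next
  assume "\<exists>L. distinct L \<and> set L = {0..<length Fs} \<and>
     (\<forall>i<length L. 0 < i \<longrightarrow> (\<exists>k<i. \<forall>h<i. Fs!(L!h) \<inter> Fs!(L!i) \<subseteq> Fs!(L!k)))"
  then obtain L where L: "distinct L" "set L = {0..<length Fs}"
    "\<forall>i<length L. 0 < i \<longrightarrow> (\<exists>k<i. \<forall>h<i. Fs!(L!h) \<inter> Fs!(L!i) \<subseteq> Fs!(L!k))" by blast
  define Gs where "Gs = map ((!) Fs) L"
  have inj: "inj_on ((!) Fs) (set L)" using L(2) dFs by (intro inj_on_nth) auto
  have dG: "distinct Gs" unfolding Gs_def using L(1) inj by (simp add: distinct_map)
  have sG: "set Gs = facets \<Delta>" unfolding Gs_def using L(2) sFs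
    by (metis list.set_map map_nth set_map set_upt)
  have lenG: "length Gs = length L" unfolding Gs_def by simp
  have "is_leaf (generated (set (take (Suc i) Gs))) (Gs ! i)" if i: "i < length Gs" for i
  proof -
    let ?S = "set (take (Suc i) Gs)"
    have S: "?S = (!) Gs ` {0..<Suc i}" using set_take_nth i by auto
    have Ssub: "?S \<subseteq> facets \<Delta>" using set_take_subset[of "Suc i" Gs] sG by blast
    have inS: "Gs ! i \<in> ?S" using S by auto
    show ?thesis
    proof (cases "i = 0")
      case True
      then have "?S = {Gs ! i}" using S by auto
      then show ?thesis unfolding is_leaf_def facets_generated[OF Ssub] by auto
    next
      case False
      then obtain k where k: "k < i" "\<forall>h<i. Fs!(L!h) \<inter> Fs!(L!i) \<subseteq> Fs!(L!k)"
        using L(3) i lenG by auto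
      have GL: "Gs ! x = Fs ! (L ! x)" if "x < length L" for x using that unfolding Gs_def by simp
      have "Gs ! k \<in> ?S" using S k by auto
      moreover have "Gs ! k \<noteq> Gs ! i" using dG k i by (simp add: nth_eq_iff_index_eq)
      moreover have "\<forall>H\<in>?S. H \<noteq> Gs ! i \<longrightarrow> H \<inter> Gs ! i \<subseteq> Gs ! k \<inter> Gs ! i"
      proof (intro ballI impI)
        fix H assume "H \<in> ?S" "H \<noteq> Gs ! i"
        have "H \<in> (!) Gs ` {0..<Suc i}" using \<open>H \<in> ?S\<close> S by simp
        then obtain h where h: "h < Suc i" "H = Gs ! h" by auto
        then have "h < i" using \<open>H \<noteq> Gs ! i\<close> by (cases "h = i") auto
        then show "H \<inter> Gs ! i \<subseteq> Gs ! k \<inter> Gs ! i" using k h GL i lenG by auto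
      qed
      ultimately show ?thesis using inS unfolding is_leaf_def facets_generated[OF Ssub] by blast
    qed
  qed
  then show "quasi_tree \<Delta>" unfolding quasi_tree_def using dG sG by blast
qed


definition iota :: "nat \<Rightarrow> nat \<Rightarrow> nat" where "iota j c = (if c < j then c else Suc c)"
definition kappa :: "nat \<Rightarrow> nat \<Rightarrow> nat" where "kappa j v = (if v < j then v else v - 1)"

lemma kappa_iota[simp]: "kappa j (iota j c) = c"
  unfolding iota_def kappa_def by auto

lemma iota_kappa: "v \<noteq> j \<Longrightarrow> iota j (kappa j v) = v"
  unfolding iota_def kappa_def by auto

lemma iota_bij: "j < t \<Longrightarrow> bij_betw (iota j) {0..<t-1} ({0..<t} - {j})"
proof (rule bij_betw_byWitness[where f'="kappa j"])
  show "\<forall>a\<in>{0..<t - 1}. kappa j (iota j a) = a" by simp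
  show "\<forall>a'\<in>{0..<t} - {j}. iota j (kappa j a') = a'" using iota_kappa by blast
  show "iota j ` {0..<t - 1} \<subseteq> {0..<t} - {j}" unfolding iota_def by auto
  assume "j < t"
  then show "kappa j ` ({0..<t} - {j}) \<subseteq> {0..<t - 1}" unfolding kappa_def by auto
qed

lemma kappa_bij: "j < t \<Longrightarrow> bij_betw (kappa j) ({0..<t} - {j}) {0..<t-1}"
proof (rule bij_betw_byWitness[where f'="iota j"])
  show "\<forall>a\<in>{0..<t} - {j}. iota j (kappa j a) = a" using iota_kappa by blast
  show "\<forall>a'\<in>{0..<t - 1}. kappa j (iota j a') = a'" by simp
  show "iota j ` {0..<t - 1} \<subseteq> {0..<t} - {j}" unfolding iota_def by auto
  assume "j < t"
  then show "kappa j ` ({0..<t} - {j}) \<subseteq> {0..<t - 1}" unfolding kappa_def by auto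
qed

lemma M_entry_eq: "fst e \<noteq> snd e \<Longrightarrow>
  M_entry Fs e k = (if k \<in> ends e then xprod (Fs!k - Fs!(oth e k)) else 0)"
proof (cases e)
  case (Pair a b)
  assume "fst e \<noteq> snd e"
  then show ?thesis using Pair by (simp add: M_entry_def ends_def oth_def)
qed

lemma del_col_dims: "dim_row (del_col A j) = dim_row A" "dim_col (del_col A j) = dim_col A - 1"
  unfolding del_col_def by simp_all

lemma M_sub_dims: "dim_row (M_sub Fs rs) = length rs" "dim_col (M_sub Fs rs) = length Fs"
  unfolding M_sub_def by simp_all

lemma A_carrier:
  assumes len: "length rs = length Fs - 1"
  shows "(del_col (M_sub Fs rs) j :: 'k::field mpoly mat) \<in> carrier_mat (length rs) (length rs)"
proof -
  have 1: "dim_row (del_col (M_sub Fs rs) j :: 'k::field mpoly mat) = length rs"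
  proof -
    have a: "dim_row (M_sub Fs rs :: 'k mpoly mat) = length rs" by (rule M_sub_dims(1))
    show ?thesis using del_col_dims(1)[of "M_sub Fs rs :: 'k mpoly mat" j] unfolding a by simp
  qed
  have 2: "dim_col (del_col (M_sub Fs rs) j :: 'k::field mpoly mat) = length rs"
  proof -
    have a: "dim_col (M_sub Fs rs :: 'k mpoly mat) = length Fs" by (rule M_sub_dims(2))
    show ?thesis using del_col_dims(2)[of "M_sub Fs rs :: 'k mpoly mat" j] len unfolding a by simp
  qed
  show ?thesis using 1 2 by (rule carrier_matI)
qed

lemma A_entry:
  assumes r: "r < length rs" and c: "c < length rs" and len: "length rs = length Fs - 1"
  shows "(del_col (M_sub Fs rs) j :: 'k::field mpoly mat) $$ (r, c) = M_entry Fs (rs!r) (iota j c)"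
proof -
  have k: "iota j c < length Fs" using c len unfolding iota_def by auto
  have r': "r < dim_row (M_sub Fs rs :: 'k mpoly mat)" using r unfolding M_sub_dims .
  have c': "c < dim_col (M_sub Fs rs :: 'k mpoly mat) - 1" using c len unfolding M_sub_dims by simp
  have "(del_col (M_sub Fs rs) j :: 'k::field mpoly mat) $$ (r, c) = (M_sub Fs rs :: 'k mpoly mat) $$ (r, iota j c)"
    unfolding del_col_def index_mat(1)[OF r' c'] iota_def by simp
  also have "\<dots> = M_entry Fs (rs!r) (iota j c)" unfolding M_sub_def index_mat(1)[OF r k] by simp
  finally show ?thesis .
qed

context
  fixes Fs :: "nat set list" and rs :: "(nat \<times> nat) list" and j :: nat
  assumes drs: "distinct rs" and len: "length rs = length Fs - 1"
    and wf: "\<forall>(a, b)\<in>set rs. a < b \<and> b < length Fs" and jt: "j < length Fs"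
    and finF: "\<forall>v<length Fs. finite (Fs!v)"
begin

lemma nth_bij: "bij_betw ((!) rs) {0..<length rs} (set rs)"
  by (rule bij_betw_nth[OF drs]) auto

lemma inv_bij: "bij_betw (inv_into {0..<length rs} ((!) rs)) (set rs) {0..<length rs}"
  using bij_betw_inv_into[OF nth_bij] .

lemma inv_nth: "r < length rs \<Longrightarrow> inv_into {0..<length rs} ((!) rs) (rs!r) = r"
  by (rule inv_into_f_f) (use nth_bij in \<open>auto simp: bij_betw_def\<close>)

lemma edge_wf: "e \<in> set rs \<Longrightarrow> fst e < snd e \<and> snd e < length Fs"
proof -
  assume "e \<in> set rs"
  then have "case e of (a, b) \<Rightarrow> a < b \<and> b < length Fs" using wf by blast
  then show ?thesis by (cases e) simp
qed

lemma edge_neq: "e \<in> set rs \<Longrightarrow> fst e \<noteq> snd e"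
  using edge_wf by fastforce

lemma ends_lt: "e \<in> set rs \<Longrightarrow> ends e \<subseteq> {0..<length Fs}"
  using edge_wf unfolding ends_def by fastforce

lemma T_nonzero:
  fixes p :: "nat \<Rightarrow> nat"
  defines "\<sigma> \<equiv> (\<lambda>e. iota j (p (inv_into {0..<length rs} ((!) rs) e)))"
  assumes p: "p permutes {0..<length rs}"
    and nz: "(\<Prod>r = 0..<length rs. (del_col (M_sub Fs rs) j :: 'k::field mpoly mat) $$ (r, p r)) \<noteq> 0"
  shows "valid {0..<length Fs} (set rs) j \<sigma> \<and>
    (\<Prod>r = 0..<length rs. (del_col (M_sub Fs rs) j :: 'k::field mpoly mat) $$ (r, p r))
      = (\<Prod>e\<in>set rs. xprod (Dset ((!) Fs) \<sigma> e))"
proof -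
  let ?A = "del_col (M_sub Fs rs) j :: 'k::field mpoly mat"
  have pr: "p r < length rs" if "r < length rs" for r using p that by (simp add: permutes_in_image)
  have nz1: "?A $$ (r, p r) \<noteq> 0" if "r < length rs" for r
  proof
    assume "?A $$ (r, p r) = 0"
    then have "(\<Prod>r = 0..<length rs. ?A $$ (r, p r)) = 0" using that by (intro prod_zero) auto
    then show False using nz by simp
  qed
  have ent: "?A $$ (r, p r) = M_entry Fs (rs!r) (iota j (p r))" if "r < length rs" for r
    using A_entry[OF that pr[OF that] len] .
  have sig: "\<sigma> (rs!r) = iota j (p r)" if "r < length rs" for r
    unfolding \<sigma>_def using inv_nth[OF that] by simp
  have inends: "iota j (p r) \<in> ends (rs!r)" if "r < length rs" for r
  proof -
    have "(M_entry Fs (rs!r) (iota j (p r)) :: 'k mpoly) \<noteq> 0" using nz1[OF that] ent[OF that] by simp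
    then show ?thesis using M_entry_eq[OF edge_neq[OF nth_mem[OF that]], of Fs "iota j (p r)"]
      by (auto split: if_splits)
  qed
  have v1: "\<forall>e\<in>set rs. \<sigma> e \<in> ends e"
  proof
    fix e assume "e \<in> set rs"
    then obtain r where r: "r < length rs" "e = rs ! r" by (auto simp: in_set_conv_nth)
    then show "\<sigma> e \<in> ends e" using inends[OF r(1)] sig[OF r(1)] by simp
  qed
  have pb: "bij_betw p {0..<length rs} {0..<length rs}" using permutes_imp_bij[OF p] .
  have ib: "bij_betw (iota j) {0..<length rs} ({0..<length Fs} - {j})" by (subst len) (rule iota_bij[OF jt])
  have eq: "\<sigma> = iota j \<circ> (p \<circ> inv_into {0..<length rs} ((!) rs))"
    unfolding \<sigma>_def by (rule ext) simp
  have v2: "bij_betw \<sigma> (set rs) ({0..<length Fs} - {j})"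
    unfolding eq by (rule bij_betw_trans[OF bij_betw_trans[OF inv_bij pb] ib])
  have "(\<Prod>r = 0..<length rs. ?A $$ (r, p r)) = (\<Prod>r = 0..<length rs. xprod (Dset ((!) Fs) \<sigma> (rs!r)))"
  proof (rule prod.cong[OF refl])
    fix r assume "r \<in> {0..<length rs}"
    then have r: "r < length rs" by simp
    show "?A $$ (r, p r) = xprod (Dset ((!) Fs) \<sigma> (rs!r))"
    proof -
      have "(M_entry Fs (rs!r) (iota j (p r)) :: 'k mpoly) = xprod (Fs ! iota j (p r) - Fs ! oth (rs ! r) (iota j (p r)))"
        using M_entry_eq[OF edge_neq[OF nth_mem[OF r]], of Fs "iota j (p r)"] inends[OF r] by simp
      then show ?thesis using ent[OF r] sig[OF r] unfolding Dset_def by simp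
    qed
  qed
  also have "\<dots> = (\<Prod>e\<in>set rs. xprod (Dset ((!) Fs) \<sigma> e))"
    using prod.reindex_bij_betw[OF nth_bij, of "\<lambda>e. xprod (Dset ((!) Fs) \<sigma> e)"] .
  finally have P: "(\<Prod>r = 0..<length rs. ?A $$ (r, p r)) = (\<Prod>e\<in>set rs. xprod (Dset ((!) Fs) \<sigma> e))" .
  have val: "valid {0..<length Fs} (set rs) j \<sigma>" unfolding valid_def using v1 v2 by blast
  show ?thesis by (rule conjI[OF val P])
qed

lemma Dset_finite: "e \<in> set rs \<Longrightarrow> s e \<in> ends e \<Longrightarrow> finite (Dset ((!) Fs) s e)"
proof -
  assume e: "e \<in> set rs" and se: "s e \<in> ends e"
  have "s e < length Fs" using ends_lt[OF e] se by auto
  then have "finite (Fs ! s e)" using finF by blast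
  then show ?thesis unfolding Dset_def by (rule finite_Diff)
qed

lemma D2:
  assumes good: "good ((!) Fs) {0..<length Fs} (set rs) j s0"
    and uniq: "\<forall>s. valid {0..<length Fs} (set rs) j s \<longrightarrow> (\<forall>e\<in>set rs. s e = s0 e)"
  shows "\<exists>c\<in>{1, -1}. det (del_col (M_sub Fs rs) j :: 'k::field mpoly mat)
            = c * xprod ((\<Union>v\<in>{0..<length Fs}. Fs ! v) - Fs ! j)"
proof -
  let ?A = "del_col (M_sub Fs rs) j :: 'k::field mpoly mat"
  let ?m = "length rs"
  let ?T = "\<lambda>p. (\<Prod>r = 0..<?m. ?A $$ (r, p r))"
  have v0: "valid {0..<length Fs} (set rs) j s0" using good[unfolded good_def] by (rule conjunct1)
  have gdis: "\<forall>e\<in>set rs. \<forall>e'\<in>set rs. e \<noteq> e' \<longrightarrow> Dset ((!) Fs) s0 e \<inter> Dset ((!) Fs) s0 e' = {}"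
    using good[unfolded good_def] by (rule conjunct1[OF conjunct2])
  have gun: "(\<Union>e\<in>set rs. Dset ((!) Fs) s0 e) = (\<Union>v\<in>{0..<length Fs}. Fs ! v) - Fs ! j"
    using good[unfolded good_def] by (rule conjunct2[OF conjunct2])
  have s0b: "bij_betw s0 (set rs) ({0..<length Fs} - {j})" using v0 unfolding valid_def by blast
  have s0e: "\<forall>e\<in>set rs. s0 e \<in> ends e" using v0 unfolding valid_def by blast
  define p0 where "p0 = (\<lambda>r. if r < ?m then kappa j (s0 (rs ! r)) else r)"
  have kb: "bij_betw (kappa j) ({0..<length Fs} - {j}) {0..<?m}" by (subst len) (rule kappa_bij[OF jt])
  have eqf: "p0 r = (kappa j \<circ> (s0 \<circ> (!) rs)) r" if "r \<in> {0..<?m}" for r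
    using that unfolding p0_def comp_def by auto
  have b: "bij_betw (kappa j \<circ> (s0 \<circ> (!) rs)) {0..<?m} {0..<?m}"
    by (rule bij_betw_trans[OF bij_betw_trans[OF nth_bij s0b] kb])
  have ee: "bij_betw p0 {0..<?m} {0..<?m} = bij_betw (kappa j \<circ> (s0 \<circ> (!) rs)) {0..<?m} {0..<?m}"
    by (rule bij_betw_cong) (rule eqf)
  have "bij_betw p0 {0..<?m} {0..<?m}" using b unfolding ee .
  then have p0p: "p0 permutes {0..<?m}"
    by (rule bij_imp_permutes) (simp add: p0_def)
  have s0ne: "s0 (rs ! r) \<noteq> j" "s0 (rs ! r) < length Fs" if "r < ?m" for r
  proof -
    have "s0 (rs ! r) \<in> {0..<length Fs} - {j}" using bij_betwE[OF s0b] nth_mem[OF that] by blast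
    then show "s0 (rs ! r) \<noteq> j" "s0 (rs ! r) < length Fs" by auto
  qed
  have ip0: "iota j (p0 r) = s0 (rs ! r)" if "r < ?m" for r
    unfolding p0_def using that iota_kappa[OF s0ne(1)[OF that]] by simp
  have Tp0: "?T p0 = xprod ((\<Union>v\<in>{0..<length Fs}. Fs ! v) - Fs ! j)"
  proof -
    have pr: "p0 r < ?m" if "r < ?m" for r using p0p that by (simp add: permutes_in_image)
    have "?T p0 = (\<Prod>r = 0..<?m. xprod (Dset ((!) Fs) s0 (rs ! r)))"
    proof (rule prod.cong[OF refl])
      fix r assume "r \<in> {0..<?m}"
      then have r: "r < ?m" by simp
      have e: "s0 (rs ! r) \<in> ends (rs ! r)" using s0e nth_mem[OF r] by blast
      have "?A $$ (r, p0 r) = M_entry Fs (rs!r) (iota j (p0 r))" by (rule A_entry[OF r pr[OF r] len])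
      also have "\<dots> = M_entry Fs (rs!r) (s0 (rs ! r))" unfolding ip0[OF r] ..
      also have "\<dots> = xprod (Dset ((!) Fs) s0 (rs ! r))"
        using M_entry_eq[OF edge_neq[OF nth_mem[OF r]], of Fs "s0 (rs ! r)"] e unfolding Dset_def by simp
      finally show "?A $$ (r, p0 r) = xprod (Dset ((!) Fs) s0 (rs ! r))" .
    qed
    also have "\<dots> = (\<Prod>e\<in>set rs. xprod (Dset ((!) Fs) s0 e))"
      using prod.reindex_bij_betw[OF nth_bij, of "\<lambda>e. xprod (Dset ((!) Fs) s0 e)"] .
    also have "\<dots> = xprod (\<Union>e\<in>set rs. Dset ((!) Fs) s0 e)"
    proof (rule xprod_UN[symmetric])
      show "finite (set rs)" by simp
      show "\<forall>e\<in>set rs. finite (Dset ((!) Fs) s0 e)"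
      proof
        fix e assume e: "e \<in> set rs"
        show "finite (Dset ((!) Fs) s0 e)" using Dset_finite[OF e] s0e e by blast
      qed
      show "\<forall>e\<in>set rs. \<forall>e'\<in>set rs. e \<noteq> e' \<longrightarrow> Dset ((!) Fs) s0 e \<inter> Dset ((!) Fs) s0 e' = {}"
        by (rule gdis)
    qed
    also have "(\<Union>e\<in>set rs. Dset ((!) Fs) s0 e) = (\<Union>v\<in>{0..<length Fs}. Fs ! v) - Fs ! j"
      by (rule gun)
    finally show ?thesis .
  qed
  have T0: "?T p = 0" if pp: "p permutes {0..<?m}" and ne: "p \<noteq> p0" for p
  proof (rule ccontr)
    assume nz: "?T p \<noteq> 0"
    let ?s = "\<lambda>e. iota j (p (inv_into {0..<length rs} ((!) rs) e))"
    have "valid {0..<length Fs} (set rs) j ?s" using T_nonzero[OF pp nz] by blast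
    then have eq: "\<forall>e\<in>set rs. ?s e = s0 e" using uniq by blast
    have "p = p0"
    proof
      fix r show "p r = p0 r"
      proof (cases "r < ?m")
        case True
        have "?s (rs ! r) = s0 (rs ! r)" using eq nth_mem[OF True] by blast
        then have "iota j (p r) = s0 (rs ! r)" unfolding inv_nth[OF True] .
        then have "iota j (p r) = iota j (p0 r)" using ip0[OF True] by simp
        then show ?thesis by (metis kappa_iota)
      next
        case False
        then have "p r = r" using pp by (simp add: permutes_not_in)
        then show ?thesis using False unfolding p0_def by simp
      qed
    qed
    then show False using ne by simp
  qed
  have "det ?A = (\<Sum>p\<in>{p. p permutes {0..<?m}}. signof p * ?T p)"
    by (rule det_def'[OF A_carrier[OF len]])
  also have "\<dots> = signof p0 * ?T p0 + (\<Sum>p\<in>{p. p permutes {0..<?m}} - {p0}. signof p * ?T p)"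
    by (rule sum.remove) (use p0p finite_permutations in auto)
  also have "(\<Sum>p\<in>{p. p permutes {0..<?m}} - {p0}. signof p * ?T p) = 0"
    by (rule sum.neutral) (use T0 in auto)
  finally have D: "det ?A = signof p0 * ?T p0 + 0" .
  have D2: "det ?A = signof p0 * xprod ((\<Union>v\<in>{0..<length Fs}. Fs ! v) - Fs ! j)"
    using D unfolding Tp0 add_0_right .
  have "(signof p0 :: 'k mpoly) \<in> {1, -1}" by (rule signof_pm_one)
  then show ?thesis using D2 by (rule bexI[rotated])
qed

lemma lookup_pm1:
  assumes "c \<in> {1, -1}"
  shows "Poly_Mapping.lookup (c * Poly_Mapping.single k (1::'k::field)) t = (if k = t then Poly_Mapping.lookup c 0 else 0)"
  using assms by (auto simp: lookup_single when_def)

lemma D1: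
  assumes c: "c \<in> {1, -1}"
    and dt: "det (del_col (M_sub Fs rs) j :: 'k::field mpoly mat) = c * xprod (X - Fs ! j)"
    and X: "X = (\<Union>v\<in>{0..<length Fs}. Fs ! v)"
  shows "\<exists>s. good ((!) Fs) {0..<length Fs} (set rs) j s"
proof -
  let ?A = "del_col (M_sub Fs rs) j :: 'k::field mpoly mat"
  let ?m = "length rs"
  let ?T = "\<lambda>p. (\<Prod>r = 0..<?m. ?A $$ (r, p r))"
  let ?P = "{p. p permutes {0..<?m}}"
  let ?sg = "\<lambda>p e. iota j (p (inv_into {0..<length rs} ((!) rs) e))"
  let ?ex = "\<lambda>p. (\<Sum>e\<in>set rs. expo (Dset ((!) Fs) (?sg p) e))"
  have finX: "finite X" unfolding X using finF by auto
  define \<tau> where "\<tau> = expo (X - Fs ! j)"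
  have c1: "Poly_Mapping.lookup (c :: 'k mpoly) 0 \<noteq> 0" using c by auto
  have lhs: "Poly_Mapping.lookup (det ?A) \<tau> \<noteq> 0"
    unfolding dt xprod_single[OF finite_Diff[OF finX]] \<tau>_def lookup_pm1[OF c] using c1 by simp
  have Tform: "?T p = Poly_Mapping.single (?ex p) 1 \<and> valid {0..<length Fs} (set rs) j (?sg p)"
    if pp: "p permutes {0..<?m}" and nz: "?T p \<noteq> 0" for p
  proof -
    have tn: "valid {0..<length Fs} (set rs) j (?sg p) \<and> ?T p = (\<Prod>e\<in>set rs. xprod (Dset ((!) Fs) (?sg p) e))"
      by (rule T_nonzero[OF pp nz])
    then have vv: "valid {0..<length Fs} (set rs) j (?sg p)" by blast
    have "(\<Prod>e\<in>set rs. (xprod (Dset ((!) Fs) (?sg p) e) :: 'k mpoly))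
        = (\<Prod>e\<in>set rs. Poly_Mapping.single (expo (Dset ((!) Fs) (?sg p) e)) 1)"
    proof (rule prod.cong[OF refl])
      fix e assume e: "e \<in> set rs"
      have "?sg p e \<in> ends e" using vv e unfolding valid_def by blast
      then show "(xprod (Dset ((!) Fs) (?sg p) e) :: 'k mpoly) = Poly_Mapping.single (expo (Dset ((!) Fs) (?sg p) e)) 1"
        by (rule xprod_single[OF Dset_finite[OF e]])
    qed
    also have "\<dots> = Poly_Mapping.single (?ex p) 1" by (rule prod_single) simp
    finally show ?thesis using tn by simp
  qed
  have "\<exists>p\<in>?P. ?T p \<noteq> 0 \<and> ?ex p = \<tau>"
  proof (rule ccontr)
    assume no: "\<not> (\<exists>p\<in>?P. ?T p \<noteq> 0 \<and> ?ex p = \<tau>)"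
    have "Poly_Mapping.lookup (det ?A) \<tau> = (\<Sum>p\<in>?P. Poly_Mapping.lookup (signof p * ?T p) \<tau>)"
      unfolding det_def'[OF A_carrier[OF len]] by (rule Poly_Mapping.lookup_sum)
    also have "\<dots> = 0"
    proof (rule sum.neutral, rule ballI)
      fix p assume pP: "p \<in> ?P"
      show "Poly_Mapping.lookup (signof p * ?T p) \<tau> = 0"
      proof (cases "?T p = 0")
        case True then show ?thesis by (simp only: True mult_zero_right Poly_Mapping.lookup_zero)
      next
        case False
        then have T1: "?T p = Poly_Mapping.single (?ex p) 1" using Tform pP by blast
        have T2: "?ex p \<noteq> \<tau>" using no pP False by blast
        have sp: "(signof p :: 'k mpoly) \<in> {1, -1}" by (rule signof_pm_one)
        show ?thesis unfolding T1 lookup_pm1[OF sp] using T2 by simp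
      qed
    qed
    finally show False using lhs by simp
  qed
  then obtain p where pP: "p \<in> ?P" and nz: "?T p \<noteq> 0" and ex: "?ex p = \<tau>" by blast
  let ?s = "?sg p"
  let ?D = "Dset ((!) Fs) ?s"
  have vv: "valid {0..<length Fs} (set rs) j ?s" using Tform pP nz by blast
  have fD: "finite (?D e)" if "e \<in> set rs" for e
  proof -
    have "?s e \<in> ends e" using vv that unfolding valid_def by blast
    then show ?thesis by (rule Dset_finite[OF that])
  qed
  have cnt: "(\<Sum>e\<in>set rs. if x \<in> ?D e then 1 else 0) = (if x \<in> X - Fs ! j then 1 else (0::nat))" for x
  proof -
    have "Poly_Mapping.lookup (?ex p) x = Poly_Mapping.lookup \<tau> x" using ex by simp
    moreover have "Poly_Mapping.lookup (?ex p) x = (\<Sum>e\<in>set rs. if x \<in> ?D e then 1 else 0)"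
      unfolding Poly_Mapping.lookup_sum using lookup_expo fD by simp
    moreover have "Poly_Mapping.lookup \<tau> x = (if x \<in> X - Fs ! j then 1 else 0)"
      unfolding \<tau>_def using lookup_expo finite_Diff[OF finX] by simp
    ultimately show ?thesis by simp
  qed
  have disj: "\<forall>e\<in>set rs. \<forall>e'\<in>set rs. e \<noteq> e' \<longrightarrow> ?D e \<inter> ?D e' = {}"
  proof (intro ballI impI)
    fix e e' assume e: "e \<in> set rs" and e': "e' \<in> set rs" and ne: "e \<noteq> e'"
    show "?D e \<inter> ?D e' = {}"
    proof (rule ccontr)
      assume "?D e \<inter> ?D e' \<noteq> {}"
      then obtain x where x: "x \<in> ?D e" "x \<in> ?D e'" by blast
      have "(\<Sum>e\<in>{e, e'}. if x \<in> ?D e then 1 else (0::nat)) \<le> (\<Sum>e\<in>set rs. if x \<in> ?D e then 1 else 0)"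
        by (rule sum_mono2) (use e e' in auto)
      moreover have "(\<Sum>e\<in>{e, e'}. if x \<in> ?D e then 1 else (0::nat)) = 2" using x ne by simp
      ultimately show False using cnt[of x] by (simp split: if_splits)
    qed
  qed
  have un: "(\<Union>e\<in>set rs. ?D e) = (\<Union>v\<in>{0..<length Fs}. Fs ! v) - Fs ! j"
  proof
    show "(\<Union>e\<in>set rs. ?D e) \<subseteq> (\<Union>v\<in>{0..<length Fs}. Fs ! v) - Fs ! j"
    proof
      fix x assume "x \<in> (\<Union>e\<in>set rs. ?D e)"
      then obtain e where e: "e \<in> set rs" "x \<in> ?D e" by blast
      have "(if x \<in> ?D e then 1 else (0::nat)) \<le> (\<Sum>e\<in>set rs. if x \<in> ?D e then 1 else 0)"
        by (rule member_le_sum) (use e in auto)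
      then have "x \<in> X - Fs ! j" using cnt[of x] e(2) by (simp split: if_splits)
      then show "x \<in> (\<Union>v\<in>{0..<length Fs}. Fs ! v) - Fs ! j" unfolding X .
    qed
    show "(\<Union>v\<in>{0..<length Fs}. Fs ! v) - Fs ! j \<subseteq> (\<Union>e\<in>set rs. ?D e)"
    proof
      fix x assume "x \<in> (\<Union>v\<in>{0..<length Fs}. Fs ! v) - Fs ! j"
      then have "(\<Sum>e\<in>set rs. if x \<in> ?D e then 1 else (0::nat)) = 1" using cnt[of x] unfolding X by simp
      show "x \<in> (\<Union>e\<in>set rs. ?D e)"
      proof (rule ccontr)
        assume "x \<notin> (\<Union>e\<in>set rs. ?D e)"
        then have "\<forall>e\<in>set rs. (if x \<in> ?D e then 1 else (0::nat)) = 0" by auto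
        then have "(\<Sum>e\<in>set rs. if x \<in> ?D e then 1 else (0::nat)) = 0" by (rule sum.neutral)
        then show False using \<open>(\<Sum>e\<in>set rs. if x \<in> ?D e then 1 else (0::nat)) = 1\<close> by simp
      qed
    qed
  qed
  have "good ((!) Fs) {0..<length Fs} (set rs) j ?s"
    unfolding good_def by (intro conjI vv disj un)
  then show ?thesis by (rule exI[where x = "?s"])
qed

end


lemma facet_above:
  assumes "finite \<Delta>" "A \<in> \<Delta>"
  shows "\<exists>G\<in>facets \<Delta>. A \<subseteq> G"
proof -
  have "finite {B\<in>\<Delta>. A \<subseteq> B}" "{B\<in>\<Delta>. A \<subseteq> B} \<noteq> {}" using assms by auto
  from finite_has_maximal[OF this] obtain G where G: "G \<in> {B\<in>\<Delta>. A \<subseteq> B}"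
    "\<forall>b\<in>{B\<in>\<Delta>. A \<subseteq> B}. G \<le> b \<longrightarrow> G = b" by blast
  have "G \<in> facets \<Delta>" unfolding facets_def using G by auto
  then show ?thesis using G by auto
qed

theorem lemma2p1:
  fixes n :: nat and \<Delta> :: "nat set set" and Fs :: "nat set list"
  assumes "simplicial_complex n \<Delta>"
    and "distinct Fs" and "set Fs = facets \<Delta>"
  shows "quasi_tree \<Delta> \<longleftrightarrow>
    (\<exists>rs. distinct rs \<and> length rs = length Fs - 1 \<and>
       (\<forall>(i, j)\<in>set rs. i < j \<and> j < length Fs) \<and>
       (\<forall>j<length Fs. \<exists>c\<in>{1, -1}.
          det (del_col (M_sub Fs rs) j) = c * (xprod ({1..n} - Fs ! j) :: 'k::field mpoly)))"
proof -
  have sc: "\<Delta> \<subseteq> Pow {1..n}" "\<forall>i\<in>{1..n}. {i} \<in> \<Delta>"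
    using assms(1) unfolding simplicial_complex_def by auto
  have finD: "finite \<Delta>" by (rule finite_subset[OF sc(1)]) simp
  have Fsub: "Fs ! v \<subseteq> {1..n}" if "v < length Fs" for v
  proof -
    have "Fs ! v \<in> facets \<Delta>" using assms(3) nth_mem[OF that] by blast
    then show ?thesis using sc(1) unfolding facets_def by auto
  qed
  have finF: "\<forall>v<length Fs. finite (Fs ! v)"
  proof (intro allI impI)
    fix v assume "v < length Fs"
    then show "finite (Fs ! v)" by (rule finite_subset[OF Fsub]) simp
  qed
  have U: "(\<Union>v\<in>{0..<length Fs}. Fs ! v) = {1..n}"
  proof
    show "(\<Union>v\<in>{0..<length Fs}. Fs ! v) \<subseteq> {1..n}"
    proof
      fix x assume "x \<in> (\<Union>v\<in>{0..<length Fs}. Fs ! v)"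
      then obtain v where "v < length Fs" "x \<in> Fs ! v" by auto
      then show "x \<in> {1..n}" using Fsub by blast
    qed
    show "{1..n} \<subseteq> (\<Union>v\<in>{0..<length Fs}. Fs ! v)"
    proof
      fix i assume i: "i \<in> {1..n}"
      then obtain G where G: "G \<in> facets \<Delta>" "{i} \<subseteq> G" using facet_above[OF finD] sc(2) by blast
      then obtain v where "v < length Fs" "Fs ! v = G" using assms(3) by (metis in_set_conv_nth)
      then show "i \<in> (\<Union>v\<in>{0..<length Fs}. Fs ! v)" using G by auto
    qed
  qed
  show ?thesis
  proof
    assume "quasi_tree \<Delta>"
    then obtain L where L: "distinct L" "set L = {0..<length Fs}"
      "\<forall>i<length L. 0 < i \<longrightarrow> (\<exists>k<i. \<forall>h<i. Fs!(L!h) \<inter> Fs!(L!i) \<subseteq> Fs!(L!k))"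
      using QT[OF assms(2,3)] by blast
    obtain E where bE: "built ((!) Fs) L E" using leaf_built[OF L(1)] L(3) by blast
    have bp: "distinct L \<and> wfE (set L) E \<and> finite E \<and> (L \<noteq> [] \<longrightarrow> card E + 1 = length L) \<and> (L = [] \<longrightarrow> E = {})"
      by (rule built_props[OF bE])
    obtain rs where srs: "set rs = E" and drs: "distinct rs" using finite_distinct_list bp by blast
    have lenL: "length L = length Fs" using L(1,2) by (metis card_atLeastLessThan diff_zero distinct_card)
    have len: "length rs = length Fs - 1"
    proof (cases "L = []")
      case True then show ?thesis using bp lenL srs by auto
    next
      case False then show ?thesis using bp lenL srs drs by (auto simp: distinct_card[symmetric])
    qed
    have wf: "\<forall>(a, b)\<in>set rs. a < b \<and> b < length Fs"
      using bp L(2) unfolding srs wfE_def by auto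
    have dets: "\<exists>c\<in>{1, -1}. det (del_col (M_sub Fs rs) j) = c * (xprod ({1..n} - Fs ! j) :: 'k::field mpoly)"
      if j: "j < length Fs" for j
    proof -
      have jL: "j \<in> set L" using L(2) j by simp
      have gg: "(\<exists>s. good ((!) Fs) (set L) E j s) \<and>
         (\<forall>s s'. valid (set L) E j s \<longrightarrow> valid (set L) E j s' \<longrightarrow> (\<forall>e\<in>E. s e = s' e))"
        using built_good[OF bE] jL by blast
      then obtain s0 where s0: "good ((!) Fs) {0..<length Fs} (set rs) j s0" unfolding srs L(2) by blast
      have v0: "valid {0..<length Fs} (set rs) j s0" using s0 unfolding good_def by blast
      have uq: "\<forall>s. valid {0..<length Fs} (set rs) j s \<longrightarrow> (\<forall>e\<in>set rs. s e = s0 e)"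
        using gg v0 unfolding srs L(2) by blast
      show ?thesis using D2[OF drs len wf j finF s0 uq] unfolding U .
    qed
    show "\<exists>rs. distinct rs \<and> length rs = length Fs - 1 \<and>
       (\<forall>(i, j)\<in>set rs. i < j \<and> j < length Fs) \<and>
       (\<forall>j<length Fs. \<exists>c\<in>{1, -1}.
          det (del_col (M_sub Fs rs) j) = c * (xprod ({1..n} - Fs ! j) :: 'k::field mpoly))"
      using drs len wf dets by blast
  next
    assume "\<exists>rs. distinct rs \<and> length rs = length Fs - 1 \<and>
       (\<forall>(i, j)\<in>set rs. i < j \<and> j < length Fs) \<and>
       (\<forall>j<length Fs. \<exists>c\<in>{1, -1}.
          det (del_col (M_sub Fs rs) j) = c * (xprod ({1..n} - Fs ! j) :: 'k::field mpoly))"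
    then obtain rs where drs: "distinct rs" and len: "length rs = length Fs - 1"
      and wf: "\<forall>(i, j)\<in>set rs. i < j \<and> j < length Fs"
      and dt: "\<forall>j<length Fs. \<exists>c\<in>{1, -1}.
          det (del_col (M_sub Fs rs) j) = c * (xprod ({1..n} - Fs ! j) :: 'k::field mpoly)" by blast
    have wfE: "wfE {0..<length Fs} (set rs)" unfolding wfE_def using wf by auto
    have cardE: "card (set rs) = card {0..<length Fs} - 1" using drs len by (simp add: distinct_card)
    have gd: "\<forall>j\<in>{0..<length Fs}. \<exists>s. good ((!) Fs) {0..<length Fs} (set rs) j s"
    proof
      fix j assume "j \<in> {0..<length Fs}"
      then have j: "j < length Fs" by simp
      obtain c where c: "c \<in> {1, -1}"
        "det (del_col (M_sub Fs rs) j) = c * (xprod ({1..n} - Fs ! j) :: 'k::field mpoly)"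
        using dt j by blast
      show "\<exists>s. good ((!) Fs) {0..<length Fs} (set rs) j s"
        by (rule D1[OF drs len wf j finF c(1) c(2) U[symmetric]])
    qed
    obtain L where bL: "built ((!) Fs) L (set rs)" "set L = {0..<length Fs}"
      using good_built[OF _ wfE cardE gd] by auto
    have "distinct L" using built_props[OF bL(1)] by blast
    then show "quasi_tree \<Delta>" using QT[OF assms(2,3)] built_leaf[OF bL(1)] bL(2) by blast
  qed
qed

end
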